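(* Let $\mathcal{C}$ be a pure $m$-dimensional finite simplicial complex embedded in $\mathbb{R}^m$ with $t(\tau)\ge t_0$ for every $\tau\in\mathcal{C}$. Let $\sigma\in\mathcal{C}$ be an $m$-simplex of largest diameter, i.e. $L(\sigma)\ge L(\tau)$ for all $\tau\in\mathcal{C}$, and let $b$ be its barycentre. If $F\colon|\mathcal{C}|\to\mathbb{R}^m$ fixes every vertex of $\mathcal{C}$ and its restriction to every $m$-simplex of $\mathcal{C}$ is a $\xi$-distortion map with $$\xi\le\frac16\,\frac{m}{m+1}\,t_0^2,$$ then $F^{-1}(F(b))=\{b\}$.
   Context: A complex is pure $m$-dimensional if every simplex is a face of an $m$-simplex. For a $j$-simplex $\tau$ ($j\ge1$): $L(\tau)$ is its longest edge length, $a(\tau)$ its smallest altitude (distance from a vertex to the affine hull of the opposite facet), $t(\tau)=a(\tau)/(jL(\tau))$; $t=1$ for vertices. $F$ is a $\xi$-distortion map on a set if $\bigl|\|F(x)-F(y)\|-\|x-y\|\bigr|\le\xi\|x-y\|$ for all $x,y$ in that set. *)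

theory Defs
  imports "HOL-Analysis.Analysis"
begin

definition is_simplex :: "'a::euclidean_space set \<Rightarrow> bool" where
  "is_simplex \<tau> \<longleftrightarrow> finite \<tau> \<and> \<tau> \<noteq> {} \<and> \<not> affine_dependent \<tau>"

definition sdim :: "'a::euclidean_space set \<Rightarrow> nat" where
  "sdim \<tau> = card \<tau> - 1"

definition simplicial_complex :: "'a::euclidean_space set set \<Rightarrow> bool" where
  "simplicial_complex K \<longleftrightarrow> finite K \<and> (\<forall>\<tau>\<in>K. is_simplex \<tau>)
     \<and> (\<forall>\<tau>\<in>K. \<forall>\<rho>. \<rho> \<subseteq> \<tau> \<and> \<rho> \<noteq> {} \<longrightarrow> \<rho> \<in> K)
     \<and> (\<forall>\<tau>\<in>K. \<forall>\<rho>\<in>K. convex hull \<tau> \<inter> convex hull \<rho> = convex hull (\<tau> \<inter> \<rho>))"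

definition pure_complex :: "nat \<Rightarrow> 'a::euclidean_space set set \<Rightarrow> bool" where
  "pure_complex m K \<longleftrightarrow> (\<forall>\<tau>\<in>K. \<exists>\<sigma>\<in>K. sdim \<sigma> = m \<and> \<tau> \<subseteq> \<sigma>)"

definition carrier_complex :: "'a::euclidean_space set set \<Rightarrow> 'a set" where
  "carrier_complex K = (\<Union>\<tau>\<in>K. convex hull \<tau>)"

definition vertices_complex :: "'a::euclidean_space set set \<Rightarrow> 'a set" where
  "vertices_complex K = \<Union>K"

definition Lsimp :: "'a::euclidean_space set \<Rightarrow> real" where
  "Lsimp \<tau> = Max {dist u v | u v. u \<in> \<tau> \<and> v \<in> \<tau>}"

definition asimp :: "'a::euclidean_space set \<Rightarrow> real" where
  "asimp \<tau> = Min ((\<lambda>v. infdist v (affine hull (\<tau> - {v}))) ` \<tau>)"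

definition tsimp :: "'a::euclidean_space set \<Rightarrow> real" where
  "tsimp \<tau> = (if sdim \<tau> = 0 then 1 else asimp \<tau> / (real (sdim \<tau>) * Lsimp \<tau>))"

definition distortion_map :: "real \<Rightarrow> 'a::real_normed_vector set \<Rightarrow> ('a \<Rightarrow> 'b::real_normed_vector) \<Rightarrow> bool" where
  "distortion_map \<xi> S F \<longleftrightarrow>
     (\<forall>x\<in>S. \<forall>y\<in>S. \<bar>norm (F x - F y) - norm (x - y)\<bar> \<le> \<xi> * norm (x - y))"

definition barycentre :: "'a::euclidean_space set \<Rightarrow> 'a" where
  "barycentre \<tau> = (1 / real (card \<tau>)) *\<^sub>R (\<Sum>v\<in>\<tau>. v)"

end

theory Submission
  imports Defs
begin


lemma coeff_bound:
  fixes S :: "'a::euclidean_space set"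
  assumes fin: "finite S" and v: "v \<in> S" and s0: "sum \<mu> S = 0"
  shows "\<bar>\<mu> v\<bar> * infdist v (affine hull (S - {v})) \<le> norm (\<Sum>w\<in>S. \<mu> w *\<^sub>R w)"
proof (cases "\<mu> v = 0")
  case True then show ?thesis by simp
next
  case False
  define p where "p = (\<Sum>w\<in>S - {v}. (- \<mu> w / \<mu> v) *\<^sub>R w)"
  have sr: "sum \<mu> (S - {v}) = - \<mu> v"
    using s0 sum.remove[OF fin v, of \<mu>] by simp
  have "sum (\<lambda>w. - \<mu> w / \<mu> v) (S - {v}) = 1"
    using sr False by (simp add: sum_divide_distrib[symmetric] sum_negf)
  hence "p \<in> affine hull (S - {v})"
    unfolding p_def using fin by (auto simp: affine_hull_finite)
  hence "infdist v (affine hull (S - {v})) \<le> dist v p" by (rule infdist_le)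
  moreover have "(\<Sum>w\<in>S. \<mu> w *\<^sub>R w) = \<mu> v *\<^sub>R (v - p)"
  proof -
    have "(\<Sum>w\<in>S. \<mu> w *\<^sub>R w) = \<mu> v *\<^sub>R v + (\<Sum>w\<in>S - {v}. \<mu> w *\<^sub>R w)"
      using sum.remove[OF fin v] by simp
    moreover have "\<mu> v *\<^sub>R p = - (\<Sum>w\<in>S - {v}. \<mu> w *\<^sub>R w)"
      unfolding p_def scaleR_sum_right using False
      by (simp add: sum_negf[symmetric])
    ultimately show ?thesis by (simp add: algebra_simps)
  qed
  ultimately show ?thesis
    by (simp add: dist_norm mult_left_mono)
qed


lemma Lsimp_ge:
  assumes "finite \<tau>" "u \<in> \<tau>" "v \<in> \<tau>"
  shows "dist u v \<le> Lsimp \<tau>"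
proof -
  have "{dist u v | u v. u \<in> \<tau> \<and> v \<in> \<tau>} = (\<lambda>(u,v). dist u v) ` (\<tau> \<times> \<tau>)" by auto
  hence fin: "finite {dist u v | u v. u \<in> \<tau> \<and> v \<in> \<tau>}" using assms(1) by simp
  show ?thesis unfolding Lsimp_def by (rule Max_ge[OF fin]) (use assms in auto)
qed

lemma hull_dist:
  fixes \<tau> :: "'a::euclidean_space set"
  assumes "finite \<tau>" "x \<in> convex hull \<tau>" "w \<in> \<tau>"
  shows "dist x w \<le> Lsimp \<tau>"
proof -
  have "\<tau> \<subseteq> cball w (Lsimp \<tau>)" using Lsimp_ge[OF assms(1) assms(3)] by (auto simp: dist_commute)
  hence "convex hull \<tau> \<subseteq> cball w (Lsimp \<tau>)" by (simp add: hull_minimal)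
  thus ?thesis using assms(2) by (auto simp: dist_commute)
qed

lemma asimp_le:
  assumes "finite \<tau>" "v \<in> \<tau>"
  shows "asimp \<tau> \<le> infdist v (affine hull (\<tau> - {v}))"
  unfolding asimp_def using assms by (intro Min_le) auto

lemma asimp_pos:
  fixes \<tau> :: "'a::euclidean_space set"
  assumes "is_simplex \<tau>" "card \<tau> \<ge> 2"
  shows "asimp \<tau> > 0"
proof -
  have fin: "finite \<tau>" and ne: "\<tau> \<noteq> {}" and ind: "\<not> affine_dependent \<tau>"
    using assms(1) by (auto simp: is_simplex_def)
  have "\<forall>v\<in>\<tau>. infdist v (affine hull (\<tau> - {v})) > 0"
  proof
    fix v assume v: "v \<in> \<tau>"
    have "card (\<tau> - {v}) \<ge> 1" using assms(2) v fin by simp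
    have "\<tau> - {v} \<noteq> {}"
    proof assume "\<tau> - {v} = {}" with \<open>1 \<le> card (\<tau> - {v})\<close> show False by simp qed
    moreover have "v \<notin> affine hull (\<tau> - {v})" using ind v by (auto simp: affine_dependent_def)
    ultimately show "infdist v (affine hull (\<tau> - {v})) > 0"
      by (intro infdist_pos_not_in_closed) auto
  qed
  thus ?thesis unfolding asimp_def using fin ne by (subst Min_gr_iff) auto
qed

lemma asimp_le_L:
  fixes \<tau> :: "'a::euclidean_space set"
  assumes "finite \<tau>" "card \<tau> \<ge> 2"
  shows "asimp \<tau> \<le> Lsimp \<tau>"
proof -
  obtain v where v: "v \<in> \<tau>" using assms by fastforce
  have "card (\<tau> - {v}) \<ge> 1" using assms v by simp
  have "\<tau> - {v} \<noteq> {}"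
    proof assume "\<tau> - {v} = {}" with \<open>1 \<le> card (\<tau> - {v})\<close> show False by simp qed
  then obtain w where w: "w \<in> \<tau> - {v}" by blast
  have "asimp \<tau> \<le> infdist v (affine hull (\<tau> - {v}))" by (rule asimp_le[OF assms(1) v])
  also have "\<dots> \<le> dist v w" by (rule infdist_le, rule hull_inc) (use w in simp)
  also have "\<dots> \<le> Lsimp \<tau>" by (rule Lsimp_ge) (use assms v w in auto)
  finally show ?thesis .
qed


lemma real_aux:
  fixes p s L \<xi> :: real
  assumes "\<bar>p - s\<bar> \<le> \<xi> * s" "0 \<le> s" "s \<le> L" "0 \<le> \<xi>" "\<xi> \<le> 1" "0 \<le> p"
  shows "\<bar>p^2 - s^2\<bar> \<le> 3 * \<xi> * L^2"
proof -
  have "\<bar>p^2 - s^2\<bar> = \<bar>p - s\<bar> * (p + s)"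
  proof -
    have "p^2 - s^2 = (p - s) * (p + s)" by (simp add: power2_eq_square algebra_simps)
    thus ?thesis using assms by (simp add: abs_mult)
  qed
  also have "\<dots> \<le> (\<xi> * s) * (2 * s + \<xi> * s)"
    using assms by (intro mult_mono) (auto simp: abs_le_iff)
  also have "\<dots> \<le> 3 * \<xi> * s^2"
  proof -
    have h: "\<xi> * \<xi> \<le> \<xi>" using assms by (simp add: mult_left_le_one_le)
    have "(\<xi> * \<xi>) * (s * s) \<le> \<xi> * (s * s)" using h by (rule mult_right_mono) simp
    thus ?thesis by (simp add: power2_eq_square algebra_simps)
  qed
  also have "\<dots> \<le> 3 * \<xi> * L^2" using assms by (intro mult_left_mono power_mono) auto
  finally show ?thesis .
qed

lemma disp_bound:
  fixes \<tau> :: "'a::euclidean_space set" and G :: "'a \<Rightarrow> 'a"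
  assumes fin: "finite \<tau>" and aff: "affine hull \<tau> = UNIV" and ct: "card \<tau> = m + 1"
    and dm: "distortion_map \<xi> (convex hull \<tau>) G" and fx: "\<forall>w\<in>\<tau>. G w = w"
    and x0: "0 \<le> \<xi>" and x1: "\<xi> \<le> 1" and x: "x \<in> convex hull \<tau>"
  shows "norm (G x - x) * asimp \<tau> \<le> 3 * real m * \<xi> * (Lsimp \<tau>)^2"
proof -
  define L where "L = Lsimp \<tau>"
  define d where "d = G x - x"
  have e: "\<bar>norm (G x - w)^2 - norm (x - w)^2\<bar> \<le> 3 * \<xi> * L^2" if w: "w \<in> \<tau>" for w
  proof -
    have wh: "w \<in> convex hull \<tau>" using w by (rule hull_inc)
    have "\<bar>norm (G x - G w) - norm (x - w)\<bar> \<le> \<xi> * norm (x - w)"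
      using dm x wh unfolding distortion_map_def by blast
    hence "\<bar>norm (G x - w) - norm (x - w)\<bar> \<le> \<xi> * norm (x - w)" using fx w by simp
    moreover have "norm (x - w) \<le> L" using hull_dist[OF fin x w] by (simp add: L_def dist_norm)
    ultimately show ?thesis using x0 x1 by (intro real_aux) auto
  qed
  have ed: "norm (G x - w)^2 - norm (x - w)^2 = d \<bullet> d + 2 * (d \<bullet> (x - w))" for w
  proof -
    have eq: "G x - w = d + (x - w)" by (simp add: d_def)
    have "norm (G x - w)^2 = norm (d + (x - w))^2" by (simp only: eq)
    also have "\<dots> = d \<bullet> d + 2 * (d \<bullet> (x - w)) + norm (x - w)^2"
      unfolding power2_norm_eq_inner by (simp add: inner_add_left inner_add_right inner_commute)
    finally show ?thesis by simp
  qed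
  obtain w0 where w0: "w0 \<in> \<tau>" using ct by (metis card.empty ex_in_conv nat.simps(3) Suc_eq_plus1)
  have ip: "\<bar>d \<bullet> (w - w0)\<bar> \<le> 3 * \<xi> * L^2" if w: "w \<in> \<tau>" for w
  proof -
    have "2 * (d \<bullet> (w - w0)) = (d \<bullet> d + 2 * (d \<bullet> (x - w0))) - (d \<bullet> d + 2 * (d \<bullet> (x - w)))"
      by (simp add: inner_diff_right algebra_simps)
    also have "\<dots> = (norm (G x - w0)^2 - norm (x - w0)^2) - (norm (G x - w)^2 - norm (x - w)^2)"
      by (simp add: ed)
    finally have "\<bar>2 * (d \<bullet> (w - w0))\<bar> \<le> \<bar>norm (G x - w0)^2 - norm (x - w0)^2\<bar> + \<bar>norm (G x - w)^2 - norm (x - w)^2\<bar>"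
      by linarith
    thus ?thesis using e[OF w] e[OF w0] by linarith
  qed
  have "x \<in> affine hull \<tau>" using aff by simp
  then obtain lx where lx: "sum lx \<tau> = 1" "(\<Sum>v\<in>\<tau>. lx v *\<^sub>R v) = x"
    unfolding affine_hull_finite[OF fin] by blast
  have "G x \<in> affine hull \<tau>" using aff by simp
  then obtain ly where ly: "sum ly \<tau> = 1" "(\<Sum>v\<in>\<tau>. ly v *\<^sub>R v) = G x"
    unfolding affine_hull_finite[OF fin] by blast
  define \<mu> where "\<mu> v = ly v - lx v" for v
  have s0: "sum \<mu> \<tau> = 0" using lx ly by (simp add: \<mu>_def sum_subtractf)
  have dsum: "(\<Sum>v\<in>\<tau>. \<mu> v *\<^sub>R v) = d"
    using lx ly by (simp add: \<mu>_def d_def scaleR_diff_left sum_subtractf)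
  have cb: "\<bar>\<mu> w\<bar> * asimp \<tau> \<le> norm d" if w: "w \<in> \<tau>" for w
  proof -
    have "\<bar>\<mu> w\<bar> * asimp \<tau> \<le> \<bar>\<mu> w\<bar> * infdist w (affine hull (\<tau> - {w}))"
      by (intro mult_left_mono asimp_le fin w) auto
    also have "\<dots> \<le> norm d" using coeff_bound[OF fin w s0] dsum by simp
    finally show ?thesis .
  qed
  have "d \<bullet> d = (\<Sum>v\<in>\<tau>. \<mu> v * (d \<bullet> v))"
    by (subst (2) dsum[symmetric]) (simp add: inner_sum_right)
  also have "\<dots> = (\<Sum>v\<in>\<tau>. \<mu> v * (d \<bullet> (v - w0)))"
  proof -
    have "(\<Sum>v\<in>\<tau>. \<mu> v * (d \<bullet> (v - w0))) = (\<Sum>v\<in>\<tau>. \<mu> v * (d \<bullet> v)) - (\<Sum>v\<in>\<tau>. \<mu> v) * (d \<bullet> w0)"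
      by (simp add: inner_diff_right right_diff_distrib sum_subtractf sum_distrib_right)
    thus ?thesis using s0 by simp
  qed
  also have "\<dots> = (\<Sum>v\<in>\<tau> - {w0}. \<mu> v * (d \<bullet> (v - w0)))"
    using sum.remove[OF fin w0, of "\<lambda>v. \<mu> v * (d \<bullet> (v - w0))"] by simp
  also have "\<dots> \<le> (\<Sum>v\<in>\<tau> - {w0}. \<bar>\<mu> v\<bar> * (3 * \<xi> * L^2))"
  proof (rule sum_mono)
    fix v assume v: "v \<in> \<tau> - {w0}"
    have "\<mu> v * (d \<bullet> (v - w0)) \<le> \<bar>\<mu> v\<bar> * \<bar>d \<bullet> (v - w0)\<bar>" by (simp add: abs_mult[symmetric])
    also have "\<dots> \<le> \<bar>\<mu> v\<bar> * (3 * \<xi> * L^2)" using ip v by (intro mult_left_mono) auto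
    finally show "\<mu> v * (d \<bullet> (v - w0)) \<le> \<bar>\<mu> v\<bar> * (3 * \<xi> * L^2)" .
  qed
  finally have A: "d \<bullet> d \<le> (\<Sum>v\<in>\<tau> - {w0}. \<bar>\<mu> v\<bar> * (3 * \<xi> * L^2))" .
  have apos: "asimp \<tau> \<ge> 0"
  proof -
    have "asimp \<tau> = infdist w0 (affine hull (\<tau> - {w0})) \<or> asimp \<tau> \<in> (\<lambda>v. infdist v (affine hull (\<tau> - {v}))) ` \<tau>"
      unfolding asimp_def using fin w0 by (intro disjI2 Min_in) auto
    thus ?thesis by (auto simp: infdist_nonneg)
  qed
  have K: "0 \<le> 3 * \<xi> * L^2" using x0 by simp
  have "(d \<bullet> d) * asimp \<tau> \<le> (\<Sum>v\<in>\<tau> - {w0}. \<bar>\<mu> v\<bar> * (3 * \<xi> * L^2)) * asimp \<tau>"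
    using A apos by (rule mult_right_mono)
  also have "\<dots> = (\<Sum>v\<in>\<tau> - {w0}. (\<bar>\<mu> v\<bar> * asimp \<tau>) * (3 * \<xi> * L^2))"
    unfolding sum_distrib_right by (rule sum.cong) (simp_all add: algebra_simps)
  also have "\<dots> \<le> (\<Sum>v\<in>\<tau> - {w0}. norm d * (3 * \<xi> * L^2))"
    using cb K by (intro sum_mono mult_right_mono) auto
  also have "\<dots> = real m * norm d * (3 * \<xi> * L^2)"
    using ct fin w0 by simp
  finally have B: "norm d * (norm d * asimp \<tau>) \<le> norm d * (3 * real m * \<xi> * L^2)"
    by (simp add: power2_norm_eq_inner[symmetric] power2_eq_square algebra_simps)
  show ?thesis
  proof (cases "norm d = 0")
    case True thus ?thesis using x0 by (simp add: d_def)
  next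
    case False
    hence "norm d > 0" by simp
    with B have "norm d * asimp \<tau> \<le> 3 * real m * \<xi> * L^2" by (simp add: mult_le_cancel_left)
    thus ?thesis by (simp add: d_def L_def)
  qed
qed


lemma inscribed:
  fixes \<sigma> :: "'a::euclidean_space set"
  assumes fin: "finite \<sigma>" and aff: "affine hull \<sigma> = UNIV" and cpos: "card \<sigma> > 0"
    and apos: "asimp \<sigma> > 0"
    and y: "norm (y - barycentre \<sigma>) \<le> asimp \<sigma> / real (card \<sigma>)"
  shows "y \<in> convex hull \<sigma>"
proof -
  define n where "n = real (card \<sigma>)"
  have npos: "n > 0" using cpos by (simp add: n_def)
  have "y \<in> affine hull \<sigma>" using aff by simp
  then obtain l where l: "sum l \<sigma> = 1" "(\<Sum>v\<in>\<sigma>. l v *\<^sub>R v) = y"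
    unfolding affine_hull_finite[OF fin] by blast
  define \<mu> where "\<mu> v = l v - 1 / n" for v
  have s0: "sum \<mu> \<sigma> = 0" using l npos by (simp add: \<mu>_def sum_subtractf n_def)
  have ds: "(\<Sum>v\<in>\<sigma>. \<mu> v *\<^sub>R v) = y - barycentre \<sigma>"
    using l by (simp add: \<mu>_def scaleR_diff_left sum_subtractf barycentre_def n_def scaleR_sum_right)
  have "\<forall>v\<in>\<sigma>. 0 \<le> l v"
  proof
    fix v assume v: "v \<in> \<sigma>"
    define a where "a = infdist v (affine hull (\<sigma> - {v}))"
    have aa: "asimp \<sigma> \<le> a" unfolding a_def by (rule asimp_le[OF fin v])
    have "\<bar>\<mu> v\<bar> * a \<le> norm (y - barycentre \<sigma>)" using coeff_bound[OF fin v s0] ds by (simp add: a_def)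
    also have "\<dots> \<le> asimp \<sigma> / n" using y by (simp add: n_def)
    also have "\<dots> \<le> a / n" using aa npos by (simp add: divide_right_mono)
    finally have "\<bar>\<mu> v\<bar> * a \<le> (1 / n) * a" by (simp add: field_simps)
    moreover have "a > 0" using aa apos by simp
    ultimately have "\<bar>\<mu> v\<bar> \<le> 1 / n" using mult_le_cancel_right_pos by blast
    thus "0 \<le> l v" by (simp add: \<mu>_def abs_le_iff)
  qed
  thus ?thesis unfolding convex_hull_finite[OF fin] using l by blast
qed

lemma bary_in:
  fixes \<sigma> :: "'a::euclidean_space set"
  assumes fin: "finite \<sigma>" and cpos: "card \<sigma> > 0"
  shows "barycentre \<sigma> \<in> convex hull \<sigma>"
  unfolding convex_hull_finite[OF fin] barycentre_def
  using cpos by (intro CollectI exI[of _ "\<lambda>_. 1 / real (card \<sigma>)"]) (simp add: scaleR_sum_right)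


lemma two_pts:
  assumes "finite \<tau>" "card \<tau> \<ge> 2"
  obtains u v where "u \<in> \<tau>" "v \<in> \<tau>" "u \<noteq> v"
proof -
  obtain u where u: "u \<in> \<tau>" using assms by fastforce
  have "card (\<tau> - {u}) \<ge> 1" using assms u by simp
  have "\<tau> - {u} \<noteq> {}"
  proof assume "\<tau> - {u} = {}" with \<open>1 \<le> card (\<tau> - {u})\<close> show False by simp qed
  then obtain v where "v \<in> \<tau> - {u}" by blast
  thus ?thesis using that u by blast
qed

lemma msimp:
  fixes \<tau> :: "'a::euclidean_space set"
  assumes dim: "m = DIM('a)" and s: "is_simplex \<tau>" and sd: "sdim \<tau> = m"
  shows "finite \<tau>" "card \<tau> = m + 1" "card \<tau> \<ge> 2" "affine hull \<tau> = UNIV"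
    "asimp \<tau> > 0" "Lsimp \<tau> > 0"
proof -
  show fin: "finite \<tau>" using s by (simp add: is_simplex_def)
  have "card \<tau> > 0" using s fin by (simp add: is_simplex_def card_gt_0_iff)
  thus c: "card \<tau> = m + 1" using sd by (simp add: sdim_def)
  have mpos: "m \<ge> 1" using dim DIM_positive[where 'a='a] by linarith
  thus c2: "card \<tau> \<ge> 2" using c by simp
  show "affine hull \<tau> = UNIV"
    using s c dim by (intro affine_independent_span_eq) (auto simp: is_simplex_def)
  show "asimp \<tau> > 0" using s c2 by (rule asimp_pos)
  obtain u v where uv: "u \<in> \<tau>" "v \<in> \<tau>" "u \<noteq> v" using two_pts[OF fin c2] by blast
  have "0 < dist u v" using uv by simp
  also have "\<dots> \<le> Lsimp \<tau>" using Lsimp_ge[OF fin uv(1,2)] .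
  finally show "Lsimp \<tau> > 0" .
qed

theorem mainTheorem5:
  fixes K :: "'a::euclidean_space set set"
    and \<sigma> :: "'a set" and F :: "'a \<Rightarrow> 'a"
    and m :: nat and t0 \<xi> :: real
  assumes dim: "m = DIM('a)"
    and cx: "simplicial_complex K"
    and pure: "pure_complex m K"
    and t0: "0 \<le> t0"
    and thick: "\<forall>\<tau>\<in>K. tsimp \<tau> \<ge> t0"
    and sig: "\<sigma> \<in> K" "sdim \<sigma> = m"
    and largest: "\<forall>\<tau>\<in>K. Lsimp \<tau> \<le> Lsimp \<sigma>"
    and fixv: "\<forall>v\<in>vertices_complex K. F v = v"
    and dist: "\<forall>\<tau>\<in>K. sdim \<tau> = m \<longrightarrow> distortion_map \<xi> (convex hull \<tau>) F"
    and xi: "\<xi> \<le> (1/6) * (real m / (real m + 1)) * t0\<^sup>2"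
  shows "{x \<in> carrier_complex K. F x = F (barycentre \<sigma>)} = {barycentre \<sigma>}"
proof -
  have simp_of: "is_simplex \<tau>" if "\<tau> \<in> K" for \<tau> using cx that by (simp add: simplicial_complex_def)
  note ms = msimp[OF dim simp_of]
  have mpos: "m \<ge> 1" using dim DIM_positive[where 'a='a] by linarith
  define b where "b = barycentre \<sigma>"
  define L where "L = Lsimp \<sigma>"
  have finS: "finite \<sigma>" and cS: "card \<sigma> = m + 1" and c2S: "card \<sigma> \<ge> 2"
    and affS: "affine hull \<sigma> = UNIV" and aS: "asimp \<sigma> > 0" and LS: "Lsimp \<sigma> > 0"
    using ms[OF sig(1) sig(2)] by auto
  have bin: "b \<in> convex hull \<sigma>" unfolding b_def using bary_in[OF finS] cS by simp
  have dS: "distortion_map \<xi> (convex hull \<sigma>) F" using dist sig by blast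
  have xi0: "0 \<le> \<xi>"
  proof -
    obtain u v where uv: "u \<in> \<sigma>" "v \<in> \<sigma>" "u \<noteq> v" using two_pts[OF finS c2S] by blast
    have "u \<in> convex hull \<sigma>" "v \<in> convex hull \<sigma>" using uv by (auto intro: hull_inc)
    hence "\<bar>norm (F u - F v) - norm (u - v)\<bar> \<le> \<xi> * norm (u - v)" using dS by (auto simp: distortion_map_def)
    moreover have "norm (u - v) > 0" using uv by simp
    ultimately show ?thesis by (meson abs_ge_zero order_trans zero_le_mult_iff not_le)
  qed
  have t01: "t0 \<le> 1"
  proof -
    have "t0 \<le> tsimp \<sigma>" using thick sig by blast
    also have "\<dots> = asimp \<sigma> / (real m * Lsimp \<sigma>)" using sig mpos by (simp add: tsimp_def)
    also have "\<dots> \<le> 1"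
    proof -
      have "asimp \<sigma> \<le> Lsimp \<sigma>" using asimp_le_L[OF finS c2S] .
      also have "\<dots> \<le> real m * Lsimp \<sigma>" using mpos LS by simp
      finally show ?thesis using mpos LS by simp
    qed
    finally show ?thesis .
  qed
  have frac: "real m / (real m + 1) \<le> 1" "0 \<le> real m / (real m + 1)" by auto
  have t2: "t0^2 \<le> 1" using t0 t01 by (simp add: power_le_one)
  have xi1: "\<xi> \<le> 1/6"
  proof -
    have "(1/6) * (real m / (real m + 1)) * t0\<^sup>2 \<le> (1/6) * 1 * 1"
      using frac t2 by (intro mult_mono) auto
    thus ?thesis using xi by linarith
  qed
  have disp: "norm (F x - x) * asimp \<tau> \<le> 3 * real m * \<xi> * (Lsimp \<tau>)^2"
    if \<tau>: "\<tau> \<in> K" "sdim \<tau> = m" and x: "x \<in> convex hull \<tau>" for \<tau> x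
  proof (rule disp_bound[OF ms(1)[OF \<tau>] ms(4)[OF \<tau>] ms(2)[OF \<tau>]])
    show "distortion_map \<xi> (convex hull \<tau>) F" using dist \<tau> by blast
    show "\<forall>w\<in>\<tau>. F w = w" using fixv \<tau> by (auto simp: vertices_complex_def)
  qed (use xi0 xi1 x in auto)
  have loc: "\<exists>\<tau>\<in>K. sdim \<tau> = m \<and> x \<in> convex hull \<tau>" if xc0: "x \<in> carrier_complex K" for x
  proof -
    obtain \<rho> where \<rho>: "\<rho> \<in> K" "x \<in> convex hull \<rho>" using xc0 by (auto simp: carrier_complex_def)
    obtain \<tau> where \<tau>: "\<tau> \<in> K" "sdim \<tau> = m" "\<rho> \<subseteq> \<tau>" using pure \<rho>(1) by (auto simp: pure_complex_def)
    have "x \<in> convex hull \<tau>" using \<rho>(2) hull_mono[OF \<tau>(3)] by blast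
    thus ?thesis using \<tau> by blast
  qed
  have main: "x = b" if xc: "x \<in> carrier_complex K" and Fx: "F x = F b" for x
  proof -
    obtain \<tau> where \<tau>: "\<tau> \<in> K" "sdim \<tau> = m" "x \<in> convex hull \<tau>" using loc[OF xc] by blast
    show ?thesis
    proof (cases "t0 = 0")
      case True
      hence xiz: "\<xi> = 0" using xi xi0 by simp
      have "norm (F x - x) * asimp \<tau> \<le> 0" using disp[OF \<tau>] xiz by simp
      hence "norm (F x - x) * asimp \<tau> \<le> 0 * asimp \<tau>" by simp
      hence "norm (F x - x) \<le> 0" using ms(5)[OF \<tau>(1,2)] mult_le_cancel_right_pos by blast
      hence "F x = x" by simp
      moreover have "norm (F b - b) * asimp \<sigma> \<le> 0" using disp[OF sig bin] xiz by simp
      hence "norm (F b - b) * asimp \<sigma> \<le> 0 * asimp \<sigma>" by simp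
      hence "norm (F b - b) \<le> 0" using aS mult_le_cancel_right_pos by blast
      hence "F b = b" by simp
      ultimately show ?thesis using Fx by metis
    next
      case False
      hence tp: "t0 > 0" using t0 by simp
      have small: "norm (F y - y) * t0 \<le> 3 * \<xi> * L"
        if \<rho>: "\<rho> \<in> K" "sdim \<rho> = m" and y: "y \<in> convex hull \<rho>" for \<rho> y
      proof -
        have Lr: "Lsimp \<rho> > 0" using ms(6)[OF \<rho>] .
        have "t0 \<le> tsimp \<rho>" using thick \<rho> by blast
        also have "\<dots> = asimp \<rho> / (real m * Lsimp \<rho>)" using \<rho> mpos by (simp add: tsimp_def)
        finally have ar: "t0 * (real m * Lsimp \<rho>) \<le> asimp \<rho>" using Lr mpos by (simp add: field_simps)
        have "norm (F y - y) * (t0 * (real m * Lsimp \<rho>)) \<le> norm (F y - y) * asimp \<rho>"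
          using ar by (simp add: mult_left_mono)
        also have "\<dots> \<le> 3 * real m * \<xi> * (Lsimp \<rho>)^2" using disp[OF \<rho> y] .
        finally have "(real m * Lsimp \<rho>) * (norm (F y - y) * t0) \<le> (real m * Lsimp \<rho>) * (3 * \<xi> * Lsimp \<rho>)"
          by (simp add: power2_eq_square algebra_simps)
        hence "norm (F y - y) * t0 \<le> 3 * \<xi> * Lsimp \<rho>" using Lr mpos
          by (simp add: mult_le_cancel_left_pos)
        also have "\<dots> \<le> 3 * \<xi> * L" using largest \<rho> xi0 by (simp add: L_def mult_left_mono)
        finally show ?thesis .
      qed
      have "norm (x - b) \<le> norm (F x - x) + norm (F b - b)"
        using Fx norm_triangle_ineq4[of "F b - b" "F x - x"] by (simp add: norm_minus_commute)
      hence "t0 * norm (x - b) \<le> t0 * (norm (F x - x) + norm (F b - b))"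
        using tp by (intro mult_left_mono) auto
      also have "\<dots> = norm (F x - x) * t0 + norm (F b - b) * t0" by (simp add: algebra_simps)
      also have "\<dots> \<le> 6 * \<xi> * L" using small[OF \<tau>] small[OF sig bin] by simp
      also have "\<dots> \<le> t0^2 * (real m / (real m + 1)) * L"
      proof -
        have "6 * \<xi> \<le> t0^2 * (real m / (real m + 1))" 
        proof -
          have e: "(1/6) * (real m / (real m + 1)) * t0\<^sup>2 = (t0^2 * (real m / (real m + 1))) / 6" by (simp add: algebra_simps)
          have "\<xi> \<le> t0^2 * (real m / (real m + 1)) / 6" using xi unfolding e .
          thus ?thesis by (simp add: field_simps)
        qed
        thus ?thesis using LS unfolding L_def by (intro mult_right_mono) auto
      qed
      also have "\<dots> \<le> t0 * (asimp \<sigma> / real (card \<sigma>))"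
      proof -
        have "t0 \<le> tsimp \<sigma>" using thick sig by blast
        also have "\<dots> = asimp \<sigma> / (real m * Lsimp \<sigma>)" using sig mpos by (simp add: tsimp_def)
        finally have ar: "t0 * real m * L \<le> asimp \<sigma>" using LS mpos by (simp add: field_simps L_def)
        have "t0^2 * (real m / (real m + 1)) * L = t0 * ((t0 * real m * L) / (real m + 1))"
          by (simp add: power2_eq_square field_simps)
        also have "\<dots> \<le> t0 * (asimp \<sigma> / (real m + 1))"
          using ar tp by (intro mult_left_mono divide_right_mono) auto
        finally show ?thesis using cS by (simp add: add.commute)
      qed
      finally have "t0 * norm (x - b) \<le> t0 * (asimp \<sigma> / real (card \<sigma>))" .
      hence "norm (x - b) \<le> asimp \<sigma> / real (card \<sigma>)" using tp mult_le_cancel_left_pos by blast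
      hence xS: "x \<in> convex hull \<sigma>" using inscribed[OF finS affS _ aS] cS by (simp add: b_def)
      show ?thesis
      proof (rule ccontr)
        assume ne: "x \<noteq> b"
        have "\<bar>norm (F x - F b) - norm (x - b)\<bar> \<le> \<xi> * norm (x - b)"
          using dS xS bin by (auto simp: distortion_map_def)
        hence "norm (x - b) \<le> \<xi> * norm (x - b)" using Fx by simp
        moreover have "norm (x - b) > 0" using ne by simp
        ultimately have "1 \<le> \<xi>" by simp
        thus False using xi1 by simp
      qed
    qed
  qed
  have "b \<in> carrier_complex K" using bin sig by (auto simp: carrier_complex_def)
  thus ?thesis using main by (auto simp: b_def)
qed

end
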